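(* Let $(X,\to)$ be a transition system over $A$. For every congruence $R\subseteq\mathcal P(X)\times\mathcal P(X)$ and $X_1,X_2\subseteq X$: $(X_1,X_2)\in\beta_t(R)$ iff ($X_1=\emptyset\iff X_2=\emptyset$) and $\delta_a[X_1]\mathrel R\delta_a[X_2]$ for all $a\in A$. The restriction of $\beta_t$ to congruences is continuous, independent of the branching type of the transition system.
   Context: $\delta_a[Y]=\{x'\mid\exists y\in Y\colon y\xrightarrow{a}x'\}$; $\Diamond_a(S)=\{x\mid\exists x'\in S\colon x\xrightarrow{a}x'\}$. A congruence is an equivalence $R$ on $\mathcal P(X)$ with $X_i\mathrel RY_i$ ($i\in I$) implying $\bigcup_iX_i\mathrel R\bigcup_iY_i$. $\alpha_t(\mathcal S)=\{(X_1,X_2)\mid\forall S\in\mathcal S\colon(X_1\cap S\neq\emptyset\iff X_2\cap S\neq\emptyset)\}$, $\gamma_t(R)=\{S\subseteq X\mid\forall(X_1,X_2)\in R\colon(X_1\cap S\neq\emptyset\iff X_2\cap S\neq\emptyset)\}$, $\mathit{lo}_t(\mathcal S)=\bigcup_{a\in A}\{\Diamond_a(S)\mid S\in\mathcal S\}\cup\{X\}$, $\beta_t=\alpha_t\circ\mathit{lo}_t\circ\gamma_t$ on the lattice $(\mathit{Eq}(\mathcal P(X)),\supseteq)$ of equivalences on $\mathcal P(X)$; continuity means preservation of suprema (in this order, intersections) of well-ordered chains. *)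

theory Defs
  imports Main
begin

definition lts :: "'x set \<Rightarrow> 'a set \<Rightarrow> ('x \<times> 'a \<times> 'x) set \<Rightarrow> bool" where
  "lts X A T \<longleftrightarrow> T \<subseteq> X \<times> A \<times> X"

definition delta :: "('x \<times> 'a \<times> 'x) set \<Rightarrow> 'a \<Rightarrow> 'x set \<Rightarrow> 'x set" where
  "delta T a Y = {x'. \<exists>y\<in>Y. (y, a, x') \<in> T}"

definition diam :: "'x set \<Rightarrow> ('x \<times> 'a \<times> 'x) set \<Rightarrow> 'a \<Rightarrow> 'x set \<Rightarrow> 'x set" where
  "diam X T a S = {x \<in> X. \<exists>x'\<in>S. (x, a, x') \<in> T}"

text \<open>Congruence: equivalence on P(X) closed under arbitrary unions of related families
  (a family (X_i, Y_i), i \<in> I, is represented by the set of its pairs).\<close>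
definition congruence :: "'x set \<Rightarrow> ('x set \<times> 'x set) set \<Rightarrow> bool" where
  "congruence X R \<longleftrightarrow> equiv (Pow X) R \<and>
     (\<forall>P. P \<subseteq> R \<longrightarrow> (\<Union>(fst ` P), \<Union>(snd ` P)) \<in> R)"

definition alpha_t :: "'x set \<Rightarrow> 'x set set \<Rightarrow> ('x set \<times> 'x set) set" where
  "alpha_t X SS = {(X1, X2). X1 \<subseteq> X \<and> X2 \<subseteq> X \<and>
      (\<forall>S\<in>SS. (X1 \<inter> S \<noteq> {} \<longleftrightarrow> X2 \<inter> S \<noteq> {}))}"

definition gamma_t :: "'x set \<Rightarrow> ('x set \<times> 'x set) set \<Rightarrow> 'x set set" where
  "gamma_t X R = {S. S \<subseteq> X \<and>
      (\<forall>(X1, X2)\<in>R. (X1 \<inter> S \<noteq> {} \<longleftrightarrow> X2 \<inter> S \<noteq> {}))}"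

definition lo_t :: "'x set \<Rightarrow> 'a set \<Rightarrow> ('x \<times> 'a \<times> 'x) set \<Rightarrow> 'x set set \<Rightarrow> 'x set set" where
  "lo_t X A T SS = (\<Union>a\<in>A. {diam X T a S | S. S \<in> SS}) \<union> {X}"

definition beta_t :: "'x set \<Rightarrow> 'a set \<Rightarrow> ('x \<times> 'a \<times> 'x) set
      \<Rightarrow> ('x set \<times> 'x set) set \<Rightarrow> ('x set \<times> 'x set) set" where
  "beta_t X A T R = alpha_t X (lo_t X A T (gamma_t X R))"

text \<open>Well-ordered chain w.r.t. the lattice order \<supseteq>: every nonempty subfamily has a
  least element in the order \<supseteq>, i.e. a largest set.\<close>
definition wo_chain_sup :: "('x set \<times> 'x set) set set \<Rightarrow> bool" where
  "wo_chain_sup C \<longleftrightarrow> (\<forall>R1\<in>C. \<forall>R2\<in>C. R1 \<subseteq> R2 \<or> R2 \<subseteq> R1) \<and>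
     (\<forall>D. D \<subseteq> C \<and> D \<noteq> {} \<longrightarrow> (\<exists>M\<in>D. \<forall>R\<in>D. R \<subseteq> M))"

end

theory Submission
  imports Defs
begin

lemma cong_equiv: "congruence X R \<Longrightarrow> equiv (Pow X) R"
  unfolding congruence_def by blast

lemma cong_sub: "congruence X R \<Longrightarrow> (Y1, Y2) \<in> R \<Longrightarrow> Y1 \<subseteq> X \<and> Y2 \<subseteq> X"
proof -
  assume "congruence X R" "(Y1, Y2) \<in> R"
  then have "(Y1, Y2) \<in> Pow X \<times> Pow X" using equiv_type[OF cong_equiv] by blast
  then show ?thesis by simp
qed

lemma cong_refl: "congruence X R \<Longrightarrow> Y \<subseteq> X \<Longrightarrow> (Y, Y) \<in> R"
  by (rule refl_onD[of "Pow X"]) (auto elim: cong_equiv[THEN equivE])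

lemma cong_sym: "congruence X R \<Longrightarrow> (Y1, Y2) \<in> R \<Longrightarrow> (Y2, Y1) \<in> R"
  by (rule symD) (auto elim: cong_equiv[THEN equivE])

lemma cong_trans: "congruence X R \<Longrightarrow> (Y1, Y2) \<in> R \<Longrightarrow> (Y2, Y3) \<in> R \<Longrightarrow> (Y1, Y3) \<in> R"
  by (rule transD) (auto elim: cong_equiv[THEN equivE])

lemma cong_union: "congruence X R \<Longrightarrow> P \<subseteq> R \<Longrightarrow> (\<Union>(fst ` P), \<Union>(snd ` P)) \<in> R"
  unfolding congruence_def by blast

lemma top_in:
  assumes c: "congruence X R" and y: "Y \<subseteq> X"
  shows "(\<Union>{Z. (Z, Y) \<in> R}, Y) \<in> R"
proof -
  let ?P = "{(Z, Y) | Z. (Z, Y) \<in> R}"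
  have "?P \<subseteq> R" by blast
  from cong_union[OF c this] have h: "(\<Union>(fst ` ?P), \<Union>(snd ` ?P)) \<in> R" .
  have "fst ` ?P = {Z. (Z, Y) \<in> R}" by force
  moreover have "snd ` ?P = {Y}" using cong_refl[OF c y] by force
  ultimately show ?thesis using h by simp
qed

lemma top_gamma:
  assumes c: "congruence X R" and y: "Y \<subseteq> X"
  shows "X - \<Union>{Z. (Z, Y) \<in> R} \<in> gamma_t X R"
proof -
  define t where "t = \<Union>{Z. (Z, Y) \<in> R}"
  have tY: "(t, Y) \<in> R" using top_in[OF c y] t_def by simp
  have tX: "t \<subseteq> X" using cong_sub[OF c tY] by blast
  have ge: "\<And>Z. (Z, Y) \<in> R \<Longrightarrow> Z \<subseteq> t" unfolding t_def by blast
  have one: "Y2 \<subseteq> t" if r: "(Y1, Y2) \<in> R" and s: "Y1 \<subseteq> t" for Y1 Y2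
  proof -
    let ?P = "{(Y1, Y2), (t, t)}"
    have "?P \<subseteq> R" using r cong_refl[OF c tX] by blast
    from cong_union[OF c this] have "(Y1 \<union> t, Y2 \<union> t) \<in> R" by simp
    moreover have "Y1 \<union> t = t" using s by blast
    ultimately have "(t, Y2 \<union> t) \<in> R" by simp
    hence "(Y2 \<union> t, Y) \<in> R" using cong_sym[OF c] cong_trans[OF c] tY by blast
    thus ?thesis using ge by blast
  qed
  show ?thesis unfolding gamma_t_def t_def[symmetric]
  proof (intro CollectI conjI ballI)
    show "X - t \<subseteq> X" by blast
    fix p assume p: "p \<in> R"
    obtain Y1 Y2 where pe: "p = (Y1, Y2)" by force
    have r: "(Y1, Y2) \<in> R" using p pe by simp
    have r': "(Y2, Y1) \<in> R" using cong_sym[OF c r] .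
    have X12: "Y1 \<subseteq> X" "Y2 \<subseteq> X" using cong_sub[OF c r] by auto
    have "Y1 \<subseteq> t \<longleftrightarrow> Y2 \<subseteq> t" using one[OF r] one[OF r'] by blast
    hence "Y1 \<inter> (X - t) \<noteq> {} \<longleftrightarrow> Y2 \<inter> (X - t) \<noteq> {}" using X12 by blast
    thus "case p of (X1, X2) \<Rightarrow> (X1 \<inter> (X - t) \<noteq> {}) = (X2 \<inter> (X - t) \<noteq> {})" using pe by simp
  qed
qed

lemma key:
  assumes c: "congruence X R" and y1: "Y1 \<subseteq> X" and y2: "Y2 \<subseteq> X"
  shows "(Y1, Y2) \<in> R \<longleftrightarrow> (\<forall>S\<in>gamma_t X R. (Y1 \<inter> S \<noteq> {} \<longleftrightarrow> Y2 \<inter> S \<noteq> {}))"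
proof
  assume "(Y1, Y2) \<in> R" thus "\<forall>S\<in>gamma_t X R. (Y1 \<inter> S \<noteq> {} \<longleftrightarrow> Y2 \<inter> S \<noteq> {})"
    unfolding gamma_t_def by blast
next
  assume h: "\<forall>S\<in>gamma_t X R. (Y1 \<inter> S \<noteq> {} \<longleftrightarrow> Y2 \<inter> S \<noteq> {})"
  define t1 where "t1 = \<Union>{Z. (Z, Y1) \<in> R}"
  define t2 where "t2 = \<Union>{Z. (Z, Y2) \<in> R}"
  have t1Y: "(t1, Y1) \<in> R" using top_in[OF c y1] t1_def by simp
  have t2Y: "(t2, Y2) \<in> R" using top_in[OF c y2] t2_def by simp
  have g1: "X - t1 \<in> gamma_t X R" using top_gamma[OF c y1] t1_def by simp
  have g2: "X - t2 \<in> gamma_t X R" using top_gamma[OF c y2] t2_def by simp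
  have "Y1 \<subseteq> t1" unfolding t1_def using cong_refl[OF c y1] by blast
  hence "Y1 \<inter> (X - t1) = {}" by blast
  hence "Y2 \<inter> (X - t1) = {}" using h g1 by simp
  hence "Y2 \<subseteq> t1" using y2 by blast
  have "Y2 \<subseteq> t2" unfolding t2_def using cong_refl[OF c y2] by blast
  hence "Y2 \<inter> (X - t2) = {}" by blast
  hence "Y1 \<inter> (X - t2) = {}" using h g2 by simp
  hence "Y1 \<subseteq> t2" using y1 by blast
  have t1X: "t1 \<subseteq> X" using cong_sub[OF c t1Y] by blast
  have t2X: "t2 \<subseteq> X" using cong_sub[OF c t2Y] by blast
  have "Y1 \<inter> (X - t2) = {}" using \<open>Y1 \<subseteq> t2\<close> by blast
  moreover have "(t1 \<inter> (X - t2) \<noteq> {}) = (Y1 \<inter> (X - t2) \<noteq> {})"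
    using g2 t1Y unfolding gamma_t_def by fast
  ultimately have "t1 \<inter> (X - t2) = {}" by simp
  hence a: "t1 \<subseteq> t2" using t1X by blast
  have "Y2 \<inter> (X - t1) = {}" using \<open>Y2 \<subseteq> t1\<close> by blast
  moreover have "(t2 \<inter> (X - t1) \<noteq> {}) = (Y2 \<inter> (X - t1) \<noteq> {})"
    using g1 t2Y unfolding gamma_t_def by fast
  ultimately have "t2 \<inter> (X - t1) = {}" by simp
  hence b: "t2 \<subseteq> t1" using t2X by blast
  have "t1 = t2" using a b by blast
  hence "(t1, Y2) \<in> R" using t2Y by simp
  thus "(Y1, Y2) \<in> R" using cong_trans[OF c cong_sym[OF c t1Y]] by blast
qed

lemma delta_sub: "lts X A T \<Longrightarrow> delta T a Y \<subseteq> X"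
  unfolding lts_def delta_def by blast

lemma diam_int: "lts X A T \<Longrightarrow> Y \<subseteq> X \<Longrightarrow>
   (Y \<inter> diam X T a S \<noteq> {}) \<longleftrightarrow> (delta T a Y \<inter> S \<noteq> {})"
  unfolding diam_def delta_def by blast

lemma part1:
  assumes l: "lts X A T" and c: "congruence X R" and x1: "X1 \<subseteq> X" and x2: "X2 \<subseteq> X"
  shows "(X1, X2) \<in> beta_t X A T R \<longleftrightarrow>
              ((X1 = {} \<longleftrightarrow> X2 = {}) \<and> (\<forall>a\<in>A. (delta T a X1, delta T a X2) \<in> R))"
proof -
  let ?G = "gamma_t X R"
  have s1: "(X1, X2) \<in> beta_t X A T R \<longleftrightarrow>
     (\<forall>S\<in>lo_t X A T ?G. (X1 \<inter> S \<noteq> {} \<longleftrightarrow> X2 \<inter> S \<noteq> {}))"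
    unfolding beta_t_def alpha_t_def using x1 x2 by simp
  have s2: "(\<forall>S\<in>lo_t X A T ?G. (X1 \<inter> S \<noteq> {} \<longleftrightarrow> X2 \<inter> S \<noteq> {})) \<longleftrightarrow>
     (X1 \<inter> X \<noteq> {} \<longleftrightarrow> X2 \<inter> X \<noteq> {}) \<and>
     (\<forall>a\<in>A. \<forall>S\<in>?G. (X1 \<inter> diam X T a S \<noteq> {} \<longleftrightarrow> X2 \<inter> diam X T a S \<noteq> {}))"
    unfolding lo_t_def by auto
  have s3: "X1 \<inter> X = X1" "X2 \<inter> X = X2" using x1 x2 by auto
  have s4: "\<And>a. (\<forall>S\<in>?G. (X1 \<inter> diam X T a S \<noteq> {} \<longleftrightarrow> X2 \<inter> diam X T a S \<noteq> {}))
      \<longleftrightarrow> (delta T a X1, delta T a X2) \<in> R"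
    using key[OF c delta_sub[OF l] delta_sub[OF l]] diam_int[OF l x1] diam_int[OF l x2] by simp
  show ?thesis using s1 s2 s3 s4 by simp
qed

lemma beta_sub: "(X1, X2) \<in> beta_t X A T R \<Longrightarrow> X1 \<subseteq> X \<and> X2 \<subseteq> X"
  unfolding beta_t_def alpha_t_def by simp

lemma inter_cong:
  assumes ne: "C \<noteq> {}" and cs: "\<forall>R\<in>C. congruence X R"
  shows "congruence X (\<Inter>C)"
proof -
  obtain R0 where R0: "R0 \<in> C" using ne by blast
  have "\<Inter>C \<subseteq> Pow X \<times> Pow X"
  proof
    fix p assume "p \<in> \<Inter>C"
    hence "p \<in> R0" using R0 by blast
    moreover obtain Y1 Y2 where "p = (Y1, Y2)" by force
    ultimately show "p \<in> Pow X \<times> Pow X" using cong_sub[of X R0] cs R0 by auto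
  qed
  moreover have "refl_on (Pow X) (\<Inter>C)"
    unfolding refl_on_def using cs cong_refl by blast
  moreover have "sym (\<Inter>C)"
    unfolding sym_def using cs cong_sym by blast
  moreover have "trans (\<Inter>C)"
    unfolding trans_def using cs cong_trans by blast
  ultimately have "equiv (Pow X) (\<Inter>C)" by (rule equivI)
  moreover have "\<forall>P. P \<subseteq> \<Inter>C \<longrightarrow> (\<Union>(fst ` P), \<Union>(snd ` P)) \<in> \<Inter>C"
  proof (intro allI impI)
    fix P assume P: "P \<subseteq> \<Inter>C"
    show "(\<Union>(fst ` P), \<Union>(snd ` P)) \<in> \<Inter>C"
    proof
      fix R assume "R \<in> C"
      hence "P \<subseteq> R" "congruence X R" using P cs by auto
      thus "(\<Union>(fst ` P), \<Union>(snd ` P)) \<in> R" using cong_union by blast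
    qed
  qed
  ultimately show ?thesis unfolding congruence_def by blast
qed

theorem mainTheorem12:
  fixes X :: "'x set" and A :: "'a set" and T :: "('x \<times> 'a \<times> 'x) set"
  assumes "lts X A T"
  shows "(\<forall>R X1 X2. congruence X R \<longrightarrow> X1 \<subseteq> X \<longrightarrow> X2 \<subseteq> X \<longrightarrow>
            ((X1, X2) \<in> beta_t X A T R \<longleftrightarrow>
              ((X1 = {} \<longleftrightarrow> X2 = {}) \<and> (\<forall>a\<in>A. (delta T a X1, delta T a X2) \<in> R))))
       \<and> (\<forall>C. C \<noteq> {} \<longrightarrow> wo_chain_sup C \<longrightarrow> (\<forall>R\<in>C. congruence X R) \<longrightarrow>
            beta_t X A T (\<Inter>C) = (\<Inter>R\<in>C. beta_t X A T R))"
proof (intro conjI allI impI)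
  fix R X1 X2 assume "congruence X R" "X1 \<subseteq> X" "X2 \<subseteq> X"
  thus "((X1, X2) \<in> beta_t X A T R \<longleftrightarrow>
              ((X1 = {} \<longleftrightarrow> X2 = {}) \<and> (\<forall>a\<in>A. (delta T a X1, delta T a X2) \<in> R)))"
    by (rule part1[OF assms])
next
  fix C :: "('x set \<times> 'x set) set set"
  assume ne: "C \<noteq> {}" and "wo_chain_sup C" and cs: "\<forall>R\<in>C. congruence X R"
  have ic: "congruence X (\<Inter>C)" using inter_cong[OF ne cs] .
  show "beta_t X A T (\<Inter>C) = (\<Inter>R\<in>C. beta_t X A T R)"
  proof (rule set_eqI)
    fix p :: "'x set \<times> 'x set"
    obtain X1 X2 where pe: "p = (X1, X2)" by force
    obtain R0 where R0: "R0 \<in> C" using ne by blast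
    show "p \<in> beta_t X A T (\<Inter>C) \<longleftrightarrow> p \<in> (\<Inter>R\<in>C. beta_t X A T R)"
    proof (cases "X1 \<subseteq> X \<and> X2 \<subseteq> X")
      case True
      then have x1: "X1 \<subseteq> X" and x2: "X2 \<subseteq> X" by auto
      have "(X1, X2) \<in> beta_t X A T (\<Inter>C) \<longleftrightarrow>
              ((X1 = {} \<longleftrightarrow> X2 = {}) \<and> (\<forall>a\<in>A. (delta T a X1, delta T a X2) \<in> \<Inter>C))"
        using part1[OF assms ic x1 x2] .
      also have "\<dots> \<longleftrightarrow> (\<forall>R\<in>C. (X1 = {} \<longleftrightarrow> X2 = {}) \<and> (\<forall>a\<in>A. (delta T a X1, delta T a X2) \<in> R))"
        using R0 by auto
      also have "\<dots> \<longleftrightarrow> (\<forall>R\<in>C. (X1, X2) \<in> beta_t X A T R)"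
        using part1[OF assms _ x1 x2] cs by simp
      finally show ?thesis unfolding pe by simp
    next
      case False
      have "(X1, X2) \<notin> beta_t X A T (\<Inter>C)" using False beta_sub by metis
      moreover have "(X1, X2) \<notin> beta_t X A T R0" using False beta_sub by metis
      ultimately show ?thesis unfolding pe using R0 by auto
    qed
  qed
qed

end
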